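(* Let $X$ be a non-negative absolutely continuous random variable with CDF $F$ and PDF $f$ (the common distribution of the identically distributed component lifetimes of a coherent system), and let $T$ be the system lifetime, with CDF $F_T(x)=q(F(x))$ and PDF $f_T(x)=q'(F(x))f(x)$, where $q$ is the distortion function. Let $0<\alpha<\infty$, $\alpha\ne1$, $\beta>0$, put $\psi_\alpha(u)=f_T^\alpha(F_T^{-1}(u))$, $\phi_\alpha(u)=f^\alpha(F^{-1}(u))$ for $0\le u\le1$, and $$\xi_{1,\alpha}=\Big(\inf_{u\in(0,1)}\frac{\psi_\alpha(q(u))}{\phi_\alpha(u)}\Big)^{\beta-1},\qquad \xi_{2,\alpha}=\Big(\sup_{u\in(0,1)}\frac{\psi_\alpha(q(u))}{\phi_\alpha(u)}\Big)^{\beta-1}.$$ Then (A) $\xi_{1,\alpha}R^\alpha_\beta(X)\le R^\alpha_\beta(T)\le \xi_{2,\alpha}R^\alpha_\beta(X)$ for $\{\alpha>1,\beta\le1\}$ or $\{0<\alpha<1,\beta\ge1\}$; (B) $\xi_{1,\alpha}R^\alpha_\beta(X)\ge R^\alpha_\beta(T)\ge \xi_{2,\alpha}R^\alpha_\beta(X)$ for $\{\alpha>1,\beta\ge1\}$ or $\{0<\alpha<1,\beta\le1\}$.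
   Context: For a non-negative absolutely continuous random variable $Z$ with PDF $h$, the Rényi information generating function is $R^\alpha_\beta(Z)=\frac{1}{1-\alpha}\left(\int_0^\infty h^\alpha(x)\,dx\right)^{\beta-1}$; all integrals are assumed finite and the infimum and supremum are assumed finite and positive. A distortion function is a continuous increasing (differentiable) function $q:[0,1]\to[0,1]$ with $q(0)=0$, $q(1)=1$. Quantile functions are $F^{-1}(u)=\inf\{x:F(x)\ge u\}$. *)

theory Defs
  imports "HOL-Probability.Probability"
begin

definition distortion :: "(real \<Rightarrow> real) \<Rightarrow> (real \<Rightarrow> real) \<Rightarrow> bool" where
  "distortion q q' \<longleftrightarrow>
     continuous_on {0..1} q \<and> mono_on {0..1} q \<and> q ` {0..1} \<subseteq> {0..1} \<and>
     q 0 = 0 \<and> q 1 = 1 \<and>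
     (\<forall>u\<in>{0..1}. (q has_real_derivative q' u) (at u within {0..1}))"

definition quantile :: "(real \<Rightarrow> real) \<Rightarrow> real \<Rightarrow> real" where
  "quantile F u = Inf {x. u \<le> F x}"

definition renyi_igf :: "real \<Rightarrow> real \<Rightarrow> (real \<Rightarrow> real) \<Rightarrow> real" where
  "renyi_igf \<alpha> \<beta> h = 1 / (1 - \<alpha>) * (LBINT x:{0..}. h x powr \<alpha>) powr (\<beta> - 1)"

end

theory Submission
  imports Defs
begin


lemma deriv_zero_const_right:
  fixes q :: "real \<Rightarrow> real"
  assumes d: "(q has_real_derivative D) (at m within {0..1})"
    and mw: "0 \<le> m" "m < w" "w \<le> 1" and c: "\<And>t. m \<le> t \<Longrightarrow> t \<le> w \<Longrightarrow> q t = q m"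
  shows "D = 0"
proof -
  have d1: "(q has_real_derivative D) (at m within {m..w})"
    by (rule DERIV_subset[OF d]) (use mw in auto)
  have d2: "((\<lambda>_. q m) has_real_derivative 0) (at m within {m..w})" by simp
  have cc: "\<forall>x\<in>{m..w}. q m = q x" using c by (metis atLeastAtMost_iff)
  have d3: "(q has_real_derivative 0) (at m within {m..w})"
    by (rule has_field_derivative_transform_within[OF d2, of 1]) (use cc mw in auto)
  show ?thesis
    by (rule has_field_derivative_unique[OF d1 d3]) (simp add: at_within_Icc_at_right mw)
qed

lemma deriv_zero_const_left:
  fixes q :: "real \<Rightarrow> real"
  assumes d: "(q has_real_derivative D) (at b within {0..1})"
    and mw: "0 < b" "b \<le> 1" and c: "\<And>t. 0 \<le> t \<Longrightarrow> t \<le> b \<Longrightarrow> q t = q b"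
  shows "D = 0"
proof -
  have d1: "(q has_real_derivative D) (at b within {0..b})"
    by (rule DERIV_subset[OF d]) (use mw in auto)
  have d2: "((\<lambda>_. q b) has_real_derivative 0) (at b within {0..b})" by simp
  have cc: "\<forall>x\<in>{0..b}. q b = q x" using c by (metis atLeastAtMost_iff)
  have d3: "(q has_real_derivative 0) (at b within {0..b})"
    by (rule has_field_derivative_transform_within[OF d2, of 1]) (use cc mw in auto)
  show ?thesis
    by (rule has_field_derivative_unique[OF d1 d3]) (simp add: at_within_Icc_at_left mw)
qed


lemma q_strict:
  fixes q q' :: "real \<Rightarrow> real" and k :: real
  assumes q: "distortion q q'" and k: "0 < k"
    and H: "\<And>t. 0 < t \<Longrightarrow> t < 1 \<Longrightarrow> (\<forall>s. 0 \<le> s \<and> s < t \<longrightarrow> q s < q t) \<Longrightarrow> k \<le> q' t"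
  shows "\<And>v w. 0 \<le> v \<Longrightarrow> v < w \<Longrightarrow> w \<le> 1 \<Longrightarrow> q v < q w"
proof -
  have cont: "continuous_on {0..1} q" and mono: "mono_on {0..1} q" and rng: "q ` {0..1} \<subseteq> {0..1}"
    and q0: "q 0 = 0" and q1: "q 1 = 1"
    and D: "\<And>u. u \<in> {0..1} \<Longrightarrow> (q has_real_derivative q' u) (at u within {0..1})"
    using q unfolding distortion_def by auto
  have monoI: "q a \<le> q b" if "0 \<le> a" "a \<le> b" "b \<le> 1" for a b
    using mono that by (auto simp: mono_on_def)
  have nn: "0 \<le> q a" "q a \<le> 1" if "0 \<le> a" "a \<le> 1" for a
    using rng that by (auto simp: image_subset_iff)
  have C1: "q w = 0" if vw: "0 \<le> v" "v < w" "w \<le> 1" "q v = q w" for v w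
  proof -
    define L where "L = {t \<in> {0..1}. q t = q w}"
    have clL: "closed L" unfolding L_def
      by (rule continuous_closed_preimage_constant[OF cont]) auto
    have vL: "v \<in> L" using vw by (auto simp: L_def)
    have bL: "bdd_below L" by (auto simp: L_def bdd_below_def)
    define m where "m = Inf L"
    have mL: "m \<in> L" unfolding m_def using closed_contains_Inf[OF _ bL clL] vL by blast
    have mv: "m \<le> v" unfolding m_def using cInf_lower[OF vL bL] .
    have m0: "0 \<le> m" "q m = q w" using mL by (auto simp: L_def)
    have const: "q t = q m" if "m \<le> t" "t \<le> w" for t
      using monoI[of m t] monoI[of t w] that m0 vw by auto
    show ?thesis
    proof (cases "m = 0")
      case True then show ?thesis using m0 q0 by simp
    next
      case False
      then have mpos: "0 < m" using m0 by simp
      have lm: "\<forall>s. 0 \<le> s \<and> s < m \<longrightarrow> q s < q m"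
      proof (intro allI impI)
        fix s assume s: "0 \<le> s \<and> s < m"
        have "q s \<le> q m" using monoI[of s m] s mv vw by auto
        moreover have "q s \<noteq> q m"
        proof
          assume "q s = q m"
          then have "s \<in> L" using s m0 mv vw by (auto simp: L_def)
          then have "m \<le> s" unfolding m_def using cInf_lower[OF _ bL] by blast
          then show False using s by simp
        qed
        ultimately show "q s < q m" by simp
      qed
      have "k \<le> q' m" using H[OF mpos _ lm] mv vw by simp
      moreover have "q' m = 0"
        by (rule deriv_zero_const_right[OF D[of m] _ _ _ const, of w]) (use m0 mv vw in auto)
      ultimately show ?thesis using k by simp
    qed
  qed
  have C2: "0 < q w" if w: "0 < w" "w \<le> 1" for w
  proof (rule ccontr)
    assume "\<not> 0 < q w"
    then have qw: "q w = 0" using nn[of w] w by simp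
    define Z where "Z = {t \<in> {0..1}. q t = 0}"
    have clZ: "closed Z" unfolding Z_def
      by (rule continuous_closed_preimage_constant[OF cont]) auto
    have wZ: "w \<in> Z" using w qw by (auto simp: Z_def)
    have bZ: "bdd_above Z" by (auto simp: Z_def bdd_above_def)
    define b where "b = Sup Z"
    have bZ': "b \<in> Z" unfolding b_def using closed_contains_Sup[OF _ bZ clZ] wZ by blast
    have wb: "w \<le> b" unfolding b_def using cSup_upper[OF wZ bZ] .
    have b1: "b < 1" using bZ' q1 by (auto simp: Z_def le_less)
    have qb: "q b = 0" using bZ' by (simp add: Z_def)
    have bpos: "0 < b" using wb w by simp
    have constb: "q t = q b" if "0 \<le> t" "t \<le> b" for t
      using monoI[of t b] nn[of t] that qb b1 by auto
    have q'b: "q' b = 0"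
      by (rule deriv_zero_const_left[OF D[of b] bpos _ constb]) (use bpos b1 in auto)
    have atb: "(q has_real_derivative 0) (at b)"
      using D[of b] q'b bpos b1 at_within_Icc_at[of 0 b 1] by auto
    have big: "k \<le> q' t" "(q has_real_derivative q' t) (at t)" if t: "b < t" "t < 1" for t
    proof -
      have "t \<notin> Z" using cSup_upper[OF _ bZ, of t] t unfolding b_def[symmetric] by auto
      then have qt: "0 < q t" using nn[of t] t bpos by (auto simp: Z_def)
      have "\<forall>s. 0 \<le> s \<and> s < t \<longrightarrow> q s < q t"
      proof (intro allI impI)
        fix s assume s: "0 \<le> s \<and> s < t"
        have "q s \<le> q t" using monoI[of s t] s t by auto
        moreover have "q s \<noteq> q t" using C1[of s t] s t qt by auto
        ultimately show "q s < q t" by simp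
      qed
      then show "k \<le> q' t" using H[of t] t bpos by simp
      show "(q has_real_derivative q' t) (at t)"
        using D[of t] t bpos at_within_Icc_at[of 0 t 1] by auto
    qed
    have lower: "k * (s - b) \<le> q s" if s: "b < s" "s < 1" for s
    proof -
      have "q b - k * b \<le> q s - k * s"
      proof (rule DERIV_nonneg_imp_increasing_open[of b s "\<lambda>x. q x - k * x"])
        show "b \<le> s" using s by simp
        fix x assume x: "b < x" "x < s"
        have "((\<lambda>x. q x - k * x) has_real_derivative q' x - k) (at x)"
          using big(2)[of x] x s by (auto intro!: derivative_eq_intros)
        then show "\<exists>y. ((\<lambda>x. q x - k * x) has_real_derivative y) (at x) \<and> 0 \<le> y"
          using big(1)[of x] x s by auto
      next
        have "continuous_on {b..s} q" by (rule continuous_on_subset[OF cont]) (use bpos s in auto)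
        then show "continuous_on {b..s} (\<lambda>x. q x - k * x)" by (auto intro!: continuous_intros)
      qed
      then show ?thesis using qb by (simp add: algebra_simps)
    qed
    have lim: "((\<lambda>h. (q (b + h) - q b) / h) \<longlongrightarrow> 0) (at 0)"
      using atb unfolding DERIV_def .
    from tendstoD[OF lim k] obtain d where d: "d > 0"
      and dd: "\<And>h. h \<noteq> 0 \<Longrightarrow> dist h 0 < d \<Longrightarrow> dist ((q (b + h) - q b) / h) 0 < k"
      unfolding eventually_at by blast
    define h where "h = min (d/2) ((1 - b)/2)"
    have hpos: "0 < h" using d b1 by (simp add: h_def)
    have hd: "dist h 0 < d" using d hpos by (simp add: h_def)
    have "h \<le> (1 - b)/2" unfolding h_def by (rule min.cobounded2)
    then have "b + h < 1" using b1 by simp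
    then have "k * h \<le> q (b + h)" using lower[of "b + h"] hpos by simp
    then have "k \<le> (q (b + h) - q b) / h" using hpos qb by (simp add: field_simps)
    moreover have "dist ((q (b + h) - q b) / h) 0 < k" using dd[OF _ hd] hpos by simp
    then have "\<bar>(q (b + h) - q b) / h\<bar> < k" by (simp only: dist_real_def diff_0_right)
    ultimately show False using abs_ge_self[of "(q (b + h) - q b) / h"] by linarith
  qed
  fix v w :: real assume vw: "0 \<le> v" "v < w" "w \<le> 1"
  have "q v \<le> q w" using monoI[of v w] vw by simp
  moreover have "q v \<noteq> q w" using C1[of v w] C2[of w] vw by auto
  ultimately show "q v < q w" by simp
qed



lemma ae_good:
  fixes \<mu> :: "real measure"
  assumes rd: "real_distribution \<mu>" and atoms: "\<And>x. measure \<mu> {x} = 0"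
  shows "AE x in \<mu>. (\<forall>y<x. cdf \<mu> y < cdf \<mu> x) \<and> (\<forall>z>x. cdf \<mu> x < cdf \<mu> z)"
proof -
  interpret real_distribution \<mu> by (rule rd)
  define F where "F = cdf \<mu>"
  have contF: "continuous_on UNIV F"
    unfolding F_def using isCont_cdf atoms by (simp add: continuous_at_imp_continuous_on)
  have monoF: "F a \<le> F b" if "a \<le> b" for a b unfolding F_def using cdf_nondecreasing that .
  have nullI: "A \<in> null_sets \<mu>" if "A \<in> sets borel" "measure \<mu> A = 0" for A
    using that by (simp add: null_sets_def emeasure_eq_measure)
  have P1: "AE x in \<mu>. \<not> (r < x \<and> x \<le> r + real n \<and> F x \<le> F r)" for r n
  proof -
    define K where "K = {r..r + real n} \<inter> {x. F x \<le> F r}"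
    have "closed {x. F x \<le> F r}"
      by (rule closed_Collect_le) (use contF in \<open>auto intro: continuous_on_const\<close>)
    then have cK: "compact K" unfolding K_def by (intro compact_Int_closed) auto
    have "r \<in> K" by (auto simp: K_def)
    then obtain s where sK: "s \<in> K" and smax: "\<And>y. y \<in> K \<Longrightarrow> y \<le> s"
      using compact_attains_sup[OF cK] by blast
    have rs: "r \<le> s" and Fs: "F s \<le> F r" using sK by (auto simp: K_def)
    have "measure \<mu> {r<..s} = 0"
    proof (cases "r < s")
      case True
      then have "measure \<mu> {r<..s} = F s - F r" unfolding F_def using cdf_diff_eq by simp
      moreover have "F r \<le> F s" using monoF rs .
      ultimately show ?thesis using Fs by simp
    next
      case False then show ?thesis using rs by simp
    qed
    then have "AE x in \<mu>. x \<notin> {r<..s}" by (intro AE_not_in nullI) auto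
    then show ?thesis
    proof (rule AE_mp, intro AE_I2 impI)
      fix x assume "x \<notin> {r<..s}"
      then show "\<not> (r < x \<and> x \<le> r + real n \<and> F x \<le> F r)"
        using smax[of x] by (auto simp: K_def)
    qed
  qed
  have P2: "AE x in \<mu>. \<not> (r - real n \<le> x \<and> x < r \<and> F r \<le> F x)" for r n
  proof -
    define K where "K = {r - real n..r} \<inter> {x. F r \<le> F x}"
    have "closed {x. F r \<le> F x}"
      by (rule closed_Collect_le) (use contF in \<open>auto intro: continuous_on_const\<close>)
    then have cK: "compact K" unfolding K_def by (intro compact_Int_closed) auto
    have "r \<in> K" by (auto simp: K_def)
    then obtain m where mK: "m \<in> K" and mmin: "\<And>y. y \<in> K \<Longrightarrow> m \<le> y"
      using compact_attains_inf[OF cK] by blast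
    have rs: "m \<le> r" and Fm: "F r \<le> F m" using mK by (auto simp: K_def)
    have "measure \<mu> {m<..r} = 0"
    proof (cases "m < r")
      case True
      then have "measure \<mu> {m<..r} = F r - F m" unfolding F_def using cdf_diff_eq by simp
      moreover have "F m \<le> F r" using monoF rs .
      ultimately show ?thesis using Fm by simp
    next
      case False then show ?thesis using rs by simp
    qed
    then have "AE x in \<mu>. x \<notin> {m<..r}" by (intro AE_not_in nullI) auto
    moreover have "AE x in \<mu>. x \<notin> {m}" by (intro AE_not_in nullI) (auto simp: atoms)
    ultimately show ?thesis
    proof (elim AE_mp, intro AE_I2 impI)
      fix x assume "x \<notin> {m<..r}" "x \<notin> {m}"
      then show "\<not> (r - real n \<le> x \<and> x < r \<and> F r \<le> F x)"
        using mmin[of x] by (auto simp: K_def)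
    qed
  qed
  have "AE x in \<mu>. \<forall>r\<in>\<rat>. \<forall>n. \<not> (r < x \<and> x \<le> r + real n \<and> F x \<le> F r) \<and>
                         \<not> (r - real n \<le> x \<and> x < r \<and> F r \<le> F x)"
    using P1 P2 by (intro AE_ball_countable' countable_rat) (simp add: AE_all_countable)
  then show ?thesis
  proof (rule AE_mp, intro AE_I2 impI conjI)
    fix x assume H: "\<forall>r\<in>\<rat>. \<forall>n. \<not> (r < x \<and> x \<le> r + real n \<and> F x \<le> F r) \<and>
                         \<not> (r - real n \<le> x \<and> x < r \<and> F r \<le> F x)"
    show "\<forall>y<x. cdf \<mu> y < cdf \<mu> x"
    proof (intro allI impI)
      fix y assume yx: "y < x"
      show "cdf \<mu> y < cdf \<mu> x"
      proof (rule ccontr)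
        assume "\<not> cdf \<mu> y < cdf \<mu> x"
        then have Fxy: "F x \<le> F y" unfolding F_def by simp
        obtain r where r: "r \<in> \<rat>" "y < r" "r < x" using Rats_dense_in_real[OF yx] by blast
        have "F y \<le> F r" using monoF r by simp
        moreover have "x \<le> r + real (nat \<lceil>x - r\<rceil>)" using real_nat_ceiling_ge[of "x - r"] by simp
        ultimately show False using H r Fxy by fastforce
      qed
    qed
    show "\<forall>z>x. cdf \<mu> x < cdf \<mu> z"
    proof (intro allI impI)
      fix z assume xz: "x < z"
      show "cdf \<mu> x < cdf \<mu> z"
      proof (rule ccontr)
        assume "\<not> cdf \<mu> x < cdf \<mu> z"
        then have Fxz: "F z \<le> F x" unfolding F_def by simp
        obtain r where r: "r \<in> \<rat>" "x < r" "r < z" using Rats_dense_in_real[OF xz] by blast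
        have "F r \<le> F z" using monoF r by simp
        moreover have "r - real (nat \<lceil>r - x\<rceil>) \<le> x" using real_nat_ceiling_ge[of "r - x"] by simp
        ultimately show False using H r Fxz by fastforce
      qed
    qed
  qed
qed



lemma quantile_cdf:
  fixes \<mu> :: "real measure"
  assumes rd: "real_distribution \<mu>" and contF: "continuous_on UNIV (cdf \<mu>)"
    and u: "0 < u" "u < 1"
  shows "cdf \<mu> (quantile (cdf \<mu>) u) = u"
proof -
  interpret real_distribution \<mu> by (rule rd)
  define F where "F = cdf \<mu>"
  define A where "A = {x. u \<le> F x}"
  have "eventually (\<lambda>x. F x > u) at_top"
    using cdf_lim_at_top_prob u unfolding F_def by (intro order_tendstoD) auto
  then obtain x0 where "F x0 > u" by (auto simp: eventually_at_top_linorder)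
  then have Ane: "A \<noteq> {}" by (auto simp: A_def intro!: exI[of _ x0])
  have "eventually (\<lambda>x. F x < u) at_bot"
    using cdf_lim_at_bot u unfolding F_def by (intro order_tendstoD) auto
  then obtain b where b: "\<And>x. x \<le> b \<Longrightarrow> F x < u" by (auto simp: eventually_at_bot_linorder)
  have bA: "\<And>x. x \<in> A \<Longrightarrow> b < x" using b by (force simp: A_def not_le[symmetric])
  then have bdd: "bdd_below A" by (auto simp: bdd_below_def intro: less_imp_le)
  have clA: "closed A" unfolding A_def
    by (rule closed_Collect_le) (use contF in \<open>auto simp: F_def intro: continuous_on_const\<close>)
  define m where "m = Inf A"
  have mA: "m \<in> A" unfolding m_def by (rule closed_contains_Inf[OF Ane bdd clA])
  have bm: "b < m" using bA[OF mA] .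
  have "\<exists>x. b \<le> x \<and> x \<le> m \<and> F x = u"
    by (rule IVT') (use b[of b] mA bm contF in \<open>auto simp: A_def F_def intro: continuous_on_subset\<close>)
  then obtain x where x: "b \<le> x" "x \<le> m" "F x = u" by blast
  have "x \<in> A" using x by (simp add: A_def)
  then have "m \<le> x" unfolding m_def by (rule cInf_lower[OF _ bdd])
  then have "x = m" using x by simp
  then show ?thesis using x by (simp add: F_def m_def A_def quantile_def)
qed

lemma final_alg:
  fixes a b c C \<alpha> \<beta> :: real
  assumes c: "0 < c" and a: "0 \<le> a" and ca: "c * a \<le> b" and bC: "b \<le> C * a"
    and \<alpha>: "0 < \<alpha>" "\<alpha> \<noteq> 1"
  shows "(((1 < \<alpha> \<and> \<beta> \<le> 1) \<or> (\<alpha> < 1 \<and> 1 \<le> \<beta>)) \<longrightarrow>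
           c powr (\<beta> - 1) * (1 / (1 - \<alpha>) * a powr (\<beta> - 1)) \<le> 1 / (1 - \<alpha>) * b powr (\<beta> - 1)
         \<and> 1 / (1 - \<alpha>) * b powr (\<beta> - 1) \<le> C powr (\<beta> - 1) * (1 / (1 - \<alpha>) * a powr (\<beta> - 1)))
       \<and> (((1 < \<alpha> \<and> 1 \<le> \<beta>) \<or> (\<alpha> < 1 \<and> \<beta> \<le> 1)) \<longrightarrow>
           c powr (\<beta> - 1) * (1 / (1 - \<alpha>) * a powr (\<beta> - 1)) \<ge> 1 / (1 - \<alpha>) * b powr (\<beta> - 1)
         \<and> 1 / (1 - \<alpha>) * b powr (\<beta> - 1) \<ge> C powr (\<beta> - 1) * (1 / (1 - \<alpha>) * a powr (\<beta> - 1)))"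
proof (cases "a = 0")
  case True
  then have "b = 0" using ca bC by simp
  then show ?thesis using True by simp
next
  case False
  then have apos: "0 < a" using a by simp
  have cap: "0 < c * a" using c apos by simp
  have bpos: "0 < b" using cap ca by simp
  have Cpos: "0 < C" using bpos bC apos by (metis less_le_trans zero_less_mult_pos2)
  define p where "p = \<beta> - 1"
  define k where "k = 1 / (1 - \<alpha>)"
  have e1: "c powr p * (k * a powr p) = k * (c * a) powr p"
    using c apos by (simp add: powr_mult)
  have e2: "C powr p * (k * a powr p) = k * (C * a) powr p"
    using Cpos apos by (simp add: powr_mult)
  have inc: "(c * a) powr p \<le> b powr p \<and> b powr p \<le> (C * a) powr p" if "0 \<le> p"
    using powr_mono2[OF that _ ca] powr_mono2[OF that _ bC] cap bpos by simp
  have dec: "b powr p \<le> (c * a) powr p \<and> (C * a) powr p \<le> b powr p" if "p \<le> 0"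
    using powr_mono2'[OF that cap ca] powr_mono2'[OF that bpos bC] by simp
  have kpos: "\<alpha> < 1 \<Longrightarrow> 0 < k" and kneg: "1 < \<alpha> \<Longrightarrow> k < 0" by (simp_all add: k_def)
  show ?thesis
    unfolding p_def[symmetric] k_def[symmetric] e1 e2
    using inc dec kpos kneg
    by (auto intro: mult_left_mono mult_left_mono_neg simp: p_def)
qed



theorem proposition6p3:
  fixes M :: "'a measure" and X T :: "'a \<Rightarrow> real"
    and f fT F FT q q' :: "real \<Rightarrow> real" and \<alpha> \<beta> :: real
  assumes M: "prob_space M"
    and X_nonneg: "AE \<omega> in M. 0 \<le> X \<omega>"
    and f_nonneg: "\<And>x. 0 \<le> f x"
    and X_distr: "distributed M lborel X (\<lambda>x. ennreal (f x))"
    and F_def: "F = cdf (distr M lborel X)"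
    and q: "distortion q q'"
    and FT_def: "FT = (\<lambda>x. q (F x))"
    and fT_def: "fT = (\<lambda>x. q' (F x) * f x)"
    and T_cdf: "cdf (distr M lborel T) = FT"
    and T_distr: "distributed M lborel T (\<lambda>x. ennreal (fT x))"
    and \<alpha>: "0 < \<alpha>" "\<alpha> \<noteq> 1" and \<beta>: "0 < \<beta>"
    and int_X: "set_integrable lborel {0..} (\<lambda>x. f x powr \<alpha>)"
    and int_T: "set_integrable lborel {0..} (\<lambda>x. fT x powr \<alpha>)"
    and bdd_below: "bdd_below ((\<lambda>u. fT (quantile FT (q u)) powr \<alpha> / f (quantile F u) powr \<alpha>) ` {0<..<1})"
    and bdd_above: "bdd_above ((\<lambda>u. fT (quantile FT (q u)) powr \<alpha> / f (quantile F u) powr \<alpha>) ` {0<..<1})"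
    and inf_pos: "0 < (INF u\<in>{0<..<1}. fT (quantile FT (q u)) powr \<alpha> / f (quantile F u) powr \<alpha>)"
  shows "(((1 < \<alpha> \<and> \<beta> \<le> 1) \<or> (\<alpha> < 1 \<and> 1 \<le> \<beta>)) \<longrightarrow>
           (INF u\<in>{0<..<1}. fT (quantile FT (q u)) powr \<alpha> / f (quantile F u) powr \<alpha>) powr (\<beta> - 1)
              * renyi_igf \<alpha> \<beta> f \<le> renyi_igf \<alpha> \<beta> fT
         \<and> renyi_igf \<alpha> \<beta> fT \<le>
           (SUP u\<in>{0<..<1}. fT (quantile FT (q u)) powr \<alpha> / f (quantile F u) powr \<alpha>) powr (\<beta> - 1)
              * renyi_igf \<alpha> \<beta> f)
       \<and> (((1 < \<alpha> \<and> 1 \<le> \<beta>) \<or> (\<alpha> < 1 \<and> \<beta> \<le> 1)) \<longrightarrow>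
           (INF u\<in>{0<..<1}. fT (quantile FT (q u)) powr \<alpha> / f (quantile F u) powr \<alpha>) powr (\<beta> - 1)
              * renyi_igf \<alpha> \<beta> f \<ge> renyi_igf \<alpha> \<beta> fT
         \<and> renyi_igf \<alpha> \<beta> fT \<ge>
           (SUP u\<in>{0<..<1}. fT (quantile FT (q u)) powr \<alpha> / f (quantile F u) powr \<alpha>) powr (\<beta> - 1)
              * renyi_igf \<alpha> \<beta> f)"
  proof -
  interpret M: prob_space M by (rule M)
  have Xm: "X \<in> measurable M lborel" using distributed_measurable[OF X_distr] .
  have fm: "(\<lambda>x. ennreal (f x)) \<in> borel_measurable lborel"
    using distributed_borel_measurable[OF X_distr] .
  define \<mu> where "\<mu> = distr M lborel X"
  have \<mu>d: "\<mu> = density lborel (\<lambda>x. ennreal (f x))"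
    unfolding \<mu>_def by (rule distributed_distr_eq_density[OF X_distr])
  have rd: "real_distribution \<mu>"
    unfolding real_distribution_def real_distribution_axioms_def \<mu>_def
    using M.prob_space_distr[OF Xm] by simp
  have atoms: "measure \<mu> {x} = 0" for x
  proof -
    have "{x} \<in> null_sets lborel" by (rule finite_imp_null_set_lborel) simp
    then have ae: "AE y in lborel. y \<notin> {x}" by (rule AE_not_in)
    have "AE y in lborel. y \<in> {x} \<longrightarrow> ennreal (f y) = 0"
      by (rule AE_mp[OF ae], rule AE_I2) simp
    then have "{x} \<in> null_sets \<mu>" unfolding \<mu>d
      by (simp add: null_sets_density_iff[OF fm])
    then show ?thesis by (simp add: measure_def null_setsD1)
  qed
  have Fc: "F = cdf \<mu>" using F_def \<mu>_def by simp
  interpret R: real_distribution \<mu> by (rule rd)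
  have contF: "continuous_on UNIV F"
    unfolding Fc using R.isCont_cdf atoms by (simp add: continuous_at_imp_continuous_on)
  have F0: "0 \<le> F y" and F1: "F y \<le> 1" for y
    unfolding Fc by (simp_all add: R.cdf_nonneg R.cdf_bounded_prob)
  have monoF: "F a \<le> F b" if "a \<le> b" for a b unfolding Fc by (rule R.cdf_nondecreasing[OF that])
  have qF: "F (quantile F u) = u" if "0 < u" "u < 1" for u
    using quantile_cdf[OF rd contF[unfolded Fc] that] unfolding Fc .
  have qmono: "mono_on {0..1} q" and qD: "\<And>u. u \<in> {0..1} \<Longrightarrow> (q has_real_derivative q' u) (at u within {0..1})"
    using q unfolding distortion_def by auto
  have monoq: "q a \<le> q b" if "0 \<le> a" "a \<le> b" "b \<le> 1" for a b
    using qmono that by (auto simp: mono_on_def)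
  define Rt where "Rt u = fT (quantile FT (q u)) powr \<alpha> / f (quantile F u) powr \<alpha>" for u
  define c where "c = (INF u\<in>{0<..<1}. Rt u)"
  define C where "C = (SUP u\<in>{0<..<1}. Rt u)"
  have cle: "c \<le> Rt u" if "u \<in> {0<..<1}" for u
    unfolding c_def Rt_def by (rule cINF_lower[OF bdd_below that])
  have Cge: "Rt u \<le> C" if "u \<in> {0<..<1}" for u
    unfolding C_def Rt_def by (rule cSUP_upper[OF that bdd_above])
  have cpos: "0 < c" using inf_pos unfolding c_def Rt_def .
  have q'nn: "0 \<le> q' t" if t: "0 < t" "t < 1" for t
  proof (rule ccontr)
    assume "\<not> 0 \<le> q' t"
    then have neg: "q' t < 0" by simp
    have "(q has_real_derivative q' t) (at t)"
      using qD[of t] t at_within_Icc_at[of 0 t 1] by auto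
    from DERIV_neg_dec_right[OF this neg] obtain d where d: "d > 0"
      and dd: "\<And>h. h > 0 \<Longrightarrow> h < d \<Longrightarrow> q t > q (t + h)" by blast
    define h where "h = min (d/2) ((1 - t)/2)"
    have h1: "h \<le> d/2" unfolding h_def by (rule min.cobounded1)
    have h2: "h \<le> (1 - t)/2" unfolding h_def by (rule min.cobounded2)
    have hpos: "0 < h" using d t by (simp add: h_def)
    have "q t > q (t + h)" using dd[OF hpos] h1 d by simp
    moreover have "q t \<le> q (t + h)" using monoq[of t "t + h"] t hpos h2 by simp
    ultimately show False by simp
  qed
  have H: "c powr (1/\<alpha>) \<le> q' t"
    if t: "0 < t" "t < 1" and lm: "\<forall>s. 0 \<le> s \<and> s < t \<longrightarrow> q s < q t" for t
  proof -
    define x where "x = quantile F t"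
    have Fx: "F x = t" unfolding x_def using qF t .
    have "{y. q t \<le> q (F y)} = {y. t \<le> F y}"
    proof (intro Collect_cong iffI)
      fix y assume "q t \<le> q (F y)"
      then show "t \<le> F y"
      proof (rule contrapos_pp)
        assume "\<not> t \<le> F y"
        then have "q (F y) < q t" using lm F0[of y] by simp
        then show "\<not> q t \<le> q (F y)" by simp
      qed
    next
      fix y assume "t \<le> F y"
      then show "q t \<le> q (F y)" using monoq[of t "F y"] t F1[of y] by simp
    qed
    then have qT: "quantile FT (q t) = x"
      unfolding x_def quantile_def FT_def by simp
    have Rtt: "Rt t = (q' t * f x) powr \<alpha> / f x powr \<alpha>"
      unfolding Rt_def qT fT_def Fx x_def[symmetric] by simp
    have ct: "c \<le> Rt t" using cle t by simp
    have fxpos: "0 < f x"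
    proof (rule ccontr)
      assume "\<not> 0 < f x"
      then have "f x = 0" using f_nonneg[of x] by simp
      then have "Rt t = 0" using Rtt by simp
      then show False using ct cpos by simp
    qed
    have "Rt t = q' t powr \<alpha>"
      using Rtt fxpos q'nn[OF t] by (simp add: powr_mult)
    then have "c \<le> q' t powr \<alpha>" using ct by simp
    then have "c powr (1/\<alpha>) \<le> (q' t powr \<alpha>) powr (1/\<alpha>)"
      using cpos \<alpha> by (intro powr_mono2) auto
    also have "\<dots> = q' t" using \<alpha> q'nn[OF t] by (simp add: powr_powr)
    finally show ?thesis .
  qed
  have kpos: "0 < c powr (1/\<alpha>)" using cpos by (intro powr_gt_zero[THEN iffD2]) simp
  have strict: "q v < q w" if "0 \<le> v" "v < w" "w \<le> 1" for v w
    by (rule q_strict[OF q kpos H that])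
  have goodAE: "AE x in lborel. 0 < ennreal (f x) \<longrightarrow>
      (\<forall>y<x. F y < F x) \<and> (\<forall>z>x. F x < F z)"
  proof -
    have g: "AE x in \<mu>. (\<forall>y<x. F y < F x) \<and> (\<forall>z>x. F x < F z)"
      unfolding Fc by (rule ae_good[OF rd atoms])
    then show ?thesis unfolding \<mu>d AE_density[OF fm] .
  qed
  have pw: "AE x in lborel. c * f x powr \<alpha> \<le> fT x powr \<alpha> \<and> fT x powr \<alpha> \<le> C * f x powr \<alpha>"
  proof (rule AE_mp[OF goodAE], rule AE_I2, rule impI)
    fix x assume imp: "0 < ennreal (f x) \<longrightarrow> (\<forall>y<x. F y < F x) \<and> (\<forall>z>x. F x < F z)"
    show "c * f x powr \<alpha> \<le> fT x powr \<alpha> \<and> fT x powr \<alpha> \<le> C * f x powr \<alpha>"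
    proof (cases "f x = 0")
      case True
      then show ?thesis by (simp add: fT_def)
    next
      case False
      then have fpos: "0 < f x" using f_nonneg[of x] by simp
      then have good: "(\<forall>y<x. F y < F x) \<and> (\<forall>z>x. F x < F z)" using imp by simp
      define u where "u = F x"
      have "F (x - 1) < F x" using good by simp
      then have u0: "0 < u" using F0[of "x - 1"] unfolding u_def by linarith
      have "F x < F (x + 1)" using good by simp
      then have u1: "u < 1" using F1[of "x + 1"] unfolding u_def by linarith
      have qx: "quantile F u = x" unfolding quantile_def u_def
      proof (rule cInf_eq_minimum)
        show "x \<in> {y. F x \<le> F y}" by simp
        fix y assume "y \<in> {y. F x \<le> F y}"
        then have "F x \<le> F y" by simp
        then show "x \<le> y"
        proof (rule contrapos_pp)
          assume "\<not> x \<le> y"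
          then have "F y < F x" using good by simp
          then show "\<not> F x \<le> F y" by simp
        qed
      qed
      have "{y. q u \<le> q (F y)} = {y. u \<le> F y}"
      proof (intro Collect_cong iffI)
        fix y assume "q u \<le> q (F y)"
        then show "u \<le> F y"
        proof (rule contrapos_pp)
          assume "\<not> u \<le> F y"
          then have "q (F y) < q u" using strict[of "F y" u] F0[of y] u1 by simp
          then show "\<not> q u \<le> q (F y)" by simp
        qed
      next
        fix y assume "u \<le> F y"
        then show "q u \<le> q (F y)" using monoq[of u "F y"] u0 F1[of y] by simp
      qed
      then have qTx: "quantile FT (q u) = x"
        using qx unfolding quantile_def FT_def by simp
      have Ru: "Rt u = fT x powr \<alpha> / f x powr \<alpha>" unfolding Rt_def qTx qx ..
      have fa: "0 < f x powr \<alpha>" using fpos by simp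
      have "c \<le> Rt u" "Rt u \<le> C" using cle Cge u0 u1 by auto
      then show ?thesis unfolding Ru using fa by (simp add: pos_le_divide_eq pos_divide_le_eq)
    qed
  qed
  define IX where "IX = (LBINT x:{0..}. f x powr \<alpha>)"
  define IT where "IT = (LBINT x:{0..}. fT x powr \<alpha>)"
  have lo: "c * IX \<le> IT"
  proof -
    have "(LBINT x:{0..}. c * f x powr \<alpha>) \<le> IT" unfolding IT_def
      by (rule set_integral_mono_AE) (use int_X int_T in simp, use int_T in simp,
          rule AE_mp[OF pw], rule AE_I2, auto)
    then show ?thesis by (simp add: IX_def)
  qed
  have hi: "IT \<le> C * IX"
  proof -
    have "IT \<le> (LBINT x:{0..}. C * f x powr \<alpha>)" unfolding IT_def
      by (rule set_integral_mono_AE) (use int_X int_T in simp, use int_X in simp,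
          rule AE_mp[OF pw], rule AE_I2, auto)
    then show ?thesis by (simp add: IX_def)
  qed
  have IX0: "0 \<le> IX" unfolding IX_def set_lebesgue_integral_def
    by (intro integral_nonneg_AE AE_I2) (simp add: indicator_def)
  have fa: "(((1 < \<alpha> \<and> \<beta> \<le> 1) \<or> (\<alpha> < 1 \<and> 1 \<le> \<beta>)) \<longrightarrow>
           c powr (\<beta> - 1) * (1 / (1 - \<alpha>) * IX powr (\<beta> - 1)) \<le> 1 / (1 - \<alpha>) * IT powr (\<beta> - 1)
         \<and> 1 / (1 - \<alpha>) * IT powr (\<beta> - 1) \<le> C powr (\<beta> - 1) * (1 / (1 - \<alpha>) * IX powr (\<beta> - 1)))
       \<and> (((1 < \<alpha> \<and> 1 \<le> \<beta>) \<or> (\<alpha> < 1 \<and> \<beta> \<le> 1)) \<longrightarrow>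
           c powr (\<beta> - 1) * (1 / (1 - \<alpha>) * IX powr (\<beta> - 1)) \<ge> 1 / (1 - \<alpha>) * IT powr (\<beta> - 1)
         \<and> 1 / (1 - \<alpha>) * IT powr (\<beta> - 1) \<ge> C powr (\<beta> - 1) * (1 / (1 - \<alpha>) * IX powr (\<beta> - 1)))"
    by (rule final_alg[OF cpos IX0 lo hi \<alpha>])
  show ?thesis
    using fa unfolding renyi_igf_def c_def C_def Rt_def IX_def IT_def .
qed

end
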